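(* If $f,g:\mathbb{R}^{N}\rightarrow [0,\infty ]$ are Borel measurable, then $$\int_{\mathbb{R}^{N}}f\barwedge g\leq 2^{N-1}\left(\int_{\mathbb{R}^{N}}\hat{f}+\int_{\mathbb{R}^{N}}\hat{g}\right).$$
   Context: $(f\barwedge g)(x):=\sup_{y}\min\{f(x-y),g(y)\}$. Enclosing balls: for nonempty bounded $X\subset\mathbb{R}^N$, $\overline{B}_X$ is the unique closed ball of minimal diameter containing $X$; $\overline{B}_X:=\mathbb{R}^N$ if $X$ unbounded; $\overline{B}_\emptyset:=\{0\}$. For $f:\mathbb{R}^N\to[-\infty,\infty]$ and $\xi\in[-\infty,\infty]$, $\rho^+_f(\xi)\in[0,\infty]$ is the radius of $\overline{B}_{\{f>\xi\}}$, $\gamma^+_f(t):=\inf\{\xi:\rho^+_f(\xi)\le t\}$ for $t\in[0,\infty)$, and $\hat f(x):=\gamma^+_f(|x|)$ (a measurable function). *)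

theory Defs
  imports "HOL-Analysis.Analysis"
begin

definition supmin_conv :: "('a::euclidean_space \<Rightarrow> ennreal) \<Rightarrow> ('a \<Rightarrow> ennreal) \<Rightarrow> 'a \<Rightarrow> ennreal" where
  "supmin_conv f g x = (SUP y. min (f (x - y)) (g y))"

definition enc_radius :: "'a::euclidean_space set \<Rightarrow> ennreal" where
  "enc_radius X = (if X = {} then 0
                   else if bounded X then ennreal (Inf {r. \<exists>c. X \<subseteq> cball c r})
                   else \<infinity>)"

definition rho_plus :: "('a::euclidean_space \<Rightarrow> ereal) \<Rightarrow> ereal \<Rightarrow> ennreal" where
  "rho_plus f \<xi> = enc_radius {x. f x > \<xi>}"

definition gamma_plus :: "('a::euclidean_space \<Rightarrow> ereal) \<Rightarrow> real \<Rightarrow> ereal" where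
  "gamma_plus f t = Inf {\<xi>. rho_plus f \<xi> \<le> ennreal t}"

definition hat :: "('a::euclidean_space \<Rightarrow> ereal) \<Rightarrow> 'a \<Rightarrow> ereal" where
  "hat f x = gamma_plus f (norm x)"

end

theory Submission imports Defs begin

lemma antimono_borel:
  fixes \<phi> :: "real \<Rightarrow> 'b::{linorder_topology, second_countable_topology}"
  assumes "\<And>a b. a \<le> b \<Longrightarrow> \<phi> b \<le> \<phi> a"
  shows "\<phi> \<in> borel_measurable borel"
proof (rule borel_measurableI_greater)
  fix y
  have "is_interval {x. y < \<phi> x}"
    unfolding is_interval_1
  proof (intro ballI allI impI)
    fix a b x assume "a \<in> {x. y < \<phi> x}" "b \<in> {x. y < \<phi> x}" "a \<le> x \<and> x \<le> b"
    then show "x \<in> {x. y < \<phi> x}" using assms[of x b] by auto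
  qed
  then show "{x \<in> space borel. y < \<phi> x} \<in> sets borel"
    using real_interval_borel_measurable by simp
qed

lemma convex_pow:
  fixes a b :: real
  assumes "0 \<le> a" "0 \<le> b" "n \<ge> 1"
  shows "(a + b) ^ n \<le> 2 ^ (n - 1) * (a ^ n + b ^ n)"
  using assms(3)
proof (induction n rule: dec_induct)
  case base then show ?case by simp
next
  case (step n)
  have key: "a * b ^ n + b * a ^ n \<le> a ^ Suc n + b ^ Suc n"
  proof -
    have "0 \<le> (a - b) * (a ^ n - b ^ n)"
    proof (cases "a \<le> b")
      case True
      then have "a ^ n \<le> b ^ n" using assms by (simp add: power_mono)
      then show ?thesis using True by (simp add: mult_nonpos_nonpos)
    next
      case False
      then have "b ^ n \<le> a ^ n" using assms by (simp add: power_mono)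
      then show ?thesis using False by simp
    qed
    then show ?thesis by (simp add: algebra_simps)
  qed
  have "(a + b) ^ Suc n = (a + b) * (a + b) ^ n" by simp
  also have "\<dots> \<le> (a + b) * (2 ^ (n - 1) * (a ^ n + b ^ n))"
    using step assms by (intro mult_left_mono) auto
  also have "\<dots> = 2 ^ (n - 1) * ((a + b) * (a ^ n + b ^ n))" by simp
  also have "\<dots> \<le> 2 ^ (n - 1) * (2 * (a ^ Suc n + b ^ Suc n))"
    using key by (intro mult_left_mono) (auto simp: algebra_simps)
  also have "\<dots> = 2 ^ (Suc n - 1) * (a ^ Suc n + b ^ Suc n)"
    using step(1) by (cases n) auto
  finally show ?case .
qed

lemma enc_radius_mono:
  fixes X Y :: "'a::euclidean_space set"
  assumes "X \<subseteq> Y"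
  shows "enc_radius X \<le> enc_radius Y"
proof (cases "X = {}")
  case True then show ?thesis by (simp add: enc_radius_def)
next
  case Xne: False
  then have Yne: "Y \<noteq> {}" using assms by auto
  show ?thesis
  proof (cases "bounded Y")
    case False then show ?thesis using Yne by (simp add: enc_radius_def)
  next
    case True
    then have bX: "bounded X" using assms bounded_subset by blast
    obtain b where "\<forall>y\<in>Y. norm y \<le> b" using True bounded_iff by blast
    then have b: "Y \<subseteq> cball 0 b" by (auto simp: dist_norm)
    have ne: "{r. \<exists>c. Y \<subseteq> cball c r} \<noteq> {}" using b by blast
    have sub: "{r. \<exists>c. Y \<subseteq> cball c r} \<subseteq> {r. \<exists>c. X \<subseteq> cball c r}" using assms by blast
    obtain x where x: "x \<in> X" using Xne by blast
    have bdd: "bdd_below {r. \<exists>c. X \<subseteq> cball c r}"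
    proof (rule bdd_belowI[of _ 0])
      fix r assume "r \<in> {r. \<exists>c. X \<subseteq> cball c r}"
      then obtain c where "X \<subseteq> cball c r" by blast
      then have "dist c x \<le> r" using x by auto
      then show "0 \<le> r" using zero_le_dist[of c x] by linarith
    qed
    have "Inf {r. \<exists>c. X \<subseteq> cball c r} \<le> Inf {r. \<exists>c. Y \<subseteq> cball c r}"
      using cInf_superset_mono[OF ne bdd sub] .
    then show ?thesis using Xne Yne True bX by (simp add: enc_radius_def ennreal_leI)
  qed
qed

lemma enc_radius_cover:
  fixes X :: "'a::euclidean_space set"
  assumes "X \<noteq> {}" "enc_radius X \<noteq> \<infinity>" "e > 0"
  shows "\<exists>c. X \<subseteq> cball c (enn2real (enc_radius X) + e)"
proof -
  have bX: "bounded X" using assms by (auto simp: enc_radius_def split: if_splits)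
  obtain b where "\<forall>y\<in>X. norm y \<le> b" using bX bounded_iff by blast
  then have b: "X \<subseteq> cball 0 b" by (auto simp: dist_norm)
  let ?S = "{r. \<exists>c. X \<subseteq> cball c r}"
  have ne: "?S \<noteq> {}" using b by blast
  obtain x where x: "x \<in> X" using assms by blast
  have lb: "\<And>r. r \<in> ?S \<Longrightarrow> 0 \<le> r"
  proof -
    fix r assume "r \<in> ?S"
    then obtain c where "X \<subseteq> cball c r" by blast
    then have "dist c x \<le> r" using x by auto
    then show "0 \<le> r" using zero_le_dist[of c x] by linarith
  qed
  have bdd: "bdd_below ?S" by (rule bdd_belowI[of _ 0], rule lb)
  have I0: "0 \<le> Inf ?S" using ne lb by (intro cInf_greatest) auto
  have eq: "enn2real (enc_radius X) = Inf ?S" using assms bX I0 by (simp add: enc_radius_def)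
  have "Inf ?S < Inf ?S + e" using assms by simp
  then obtain r where r: "r \<in> ?S" "r < Inf ?S + e" using cInf_less_iff[OF ne bdd] by blast
  then obtain c where "X \<subseteq> cball c r" by blast
  then have "X \<subseteq> cball c (Inf ?S + e)" using r(2) by auto
  then show ?thesis using eq by auto
qed


lemma rho_antimono:
  "\<xi> \<le> \<eta> \<Longrightarrow> rho_plus F \<eta> \<le> rho_plus F \<xi>"
  unfolding rho_plus_def by (rule enc_radius_mono) auto

lemma hat_ge:
  fixes F :: "'a::euclidean_space \<Rightarrow> ereal"
  assumes "ennreal (norm x) < rho_plus F (ereal t')"
  shows "ereal t' \<le> hat F x"
  unfolding hat_def gamma_plus_def
proof (rule Inf_greatest)
  fix \<xi> assume "\<xi> \<in> {\<xi>. rho_plus F \<xi> \<le> ennreal (norm x)}"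
  then have h: "rho_plus F \<xi> \<le> ennreal (norm x)" by simp
  show "ereal t' \<le> \<xi>"
  proof (rule ccontr)
    assume "\<not> ereal t' \<le> \<xi>"
    then have "\<xi> \<le> ereal t'" by simp
    then have "rho_plus F (ereal t') \<le> rho_plus F \<xi>" by (rule rho_antimono)
    then show False using h assms by simp
  qed
qed

lemma hat_measurable:
  fixes F :: "'a::euclidean_space \<Rightarrow> ereal"
  shows "(\<lambda>x. e2ennreal (hat F x)) \<in> borel_measurable borel"
proof -
  have "(\<lambda>r. e2ennreal (gamma_plus F r)) \<in> borel_measurable borel"
  proof (rule antimono_borel)
    fix a b :: real assume "a \<le> b"
    then have "{\<xi>. rho_plus F \<xi> \<le> ennreal a} \<subseteq> {\<xi>. rho_plus F \<xi> \<le> ennreal b}"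
      by (auto intro: order_trans ennreal_leI)
    then show "e2ennreal (gamma_plus F b) \<le> e2ennreal (gamma_plus F a)"
      unfolding gamma_plus_def by (intro e2ennreal_mono Inf_superset_mono)
  qed
  then show ?thesis unfolding hat_def
    by (rule measurable_compose[OF borel_measurable_norm])
qed

lemma emeasure_level_real:
  "emeasure lborel {t::real. 0 \<le> t \<and> ennreal t < c} = c"
proof (cases c)
  case (real a)
  then have "{t::real. 0 \<le> t \<and> ennreal t < c} = {0..<a}"
    by (auto simp: ennreal_less_iff)
  then show ?thesis using real by simp
next
  case top
  then have eq: "{t::real. 0 \<le> t \<and> ennreal t < c} = {0..}" by auto
  have "of_nat n \<le> emeasure lborel {0::real..}" for n
  proof -
    have "emeasure lborel {0::real..real n} \<le> emeasure lborel {0::real..}"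
      by (intro emeasure_mono) auto
    then show ?thesis by (simp add: ennreal_of_nat_eq_real_of_nat)
  qed
  then have "(SUP n. of_nat n) \<le> emeasure lborel {0::real..}"
    by (intro SUP_least)
  then have "emeasure lborel {0::real..} = \<infinity>"
    by (simp add: ennreal_SUP_of_nat_eq_top top_unique)
  then show ?thesis using eq top by simp
qed


lemma layer_cake:
  fixes h :: "'a::euclidean_space \<Rightarrow> ennreal"
  assumes hm[measurable]: "h \<in> borel_measurable borel"
  shows "(\<integral>\<^sup>+ x. h x \<partial>lborel) =
    (\<integral>\<^sup>+ t. indicator {0..} t * emeasure lborel {x. ennreal t < h x} \<partial>(lborel::real measure))"
proof -
  have PS: "pair_sigma_finite (lborel::'a measure) (lborel :: real measure)"
    by (simp add: pair_sigma_finite_def lborel.sigma_finite_measure_axioms)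
  define S where "S = {p::'a \<times> real. 0 \<le> snd p \<and> ennreal (snd p) < h (fst p)}"
  have "Measurable.pred (lborel \<Otimes>\<^sub>M lborel) (\<lambda>p::'a \<times> real. 0 \<le> snd p \<and> ennreal (snd p) < h (fst p))"
    by measurable
  then have S[measurable]: "S \<in> sets (lborel \<Otimes>\<^sub>M lborel)"
    unfolding S_def pred_def by (simp add: space_pair_measure)
  have "(\<integral>\<^sup>+ x. h x \<partial>lborel) = (\<integral>\<^sup>+ x. (\<integral>\<^sup>+ t. indicator S (x, t) \<partial>lborel) \<partial>lborel)"
  proof (rule nn_integral_cong)
    fix x :: 'a
    have "(\<lambda>t. indicator S (x, t) :: ennreal) = indicator {t::real. 0 \<le> t \<and> ennreal t < h x}"
      by (auto simp: S_def indicator_def)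
    moreover have "{t::real. 0 \<le> t \<and> ennreal t < h x} \<in> sets lborel" by measurable
    ultimately have "(\<integral>\<^sup>+ t. indicator S (x, t) \<partial>lborel) = emeasure lborel {t::real. 0 \<le> t \<and> ennreal t < h x}"
      by simp
    then show "h x = (\<integral>\<^sup>+ t. indicator S (x, t) \<partial>lborel)"
      by (simp add: emeasure_level_real)
  qed
  also have "\<dots> = (\<integral>\<^sup>+ t. (\<integral>\<^sup>+ x. indicator S (x, t) \<partial>lborel) \<partial>lborel)"
    by (rule pair_sigma_finite.Fubini'[OF PS, symmetric]) measurable
  also have "\<dots> = (\<integral>\<^sup>+ t. indicator {0..} t * emeasure lborel {x. ennreal t < h x} \<partial>lborel)"
  proof (rule nn_integral_cong)
    fix t :: real
    have "(\<lambda>x. indicator S (x, t) :: ennreal) = (\<lambda>x. indicator {0..} t * indicator {x. ennreal t < h x} x)"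
      by (auto simp: S_def indicator_def)
    moreover have "{x. ennreal t < h x} \<in> sets lborel" by measurable
    ultimately show "(\<integral>\<^sup>+ x. indicator S (x, t) \<partial>lborel) = indicator {0..} t * emeasure lborel {x. ennreal t < h x}"
      by (simp add: nn_integral_cmult)
  qed
  finally show ?thesis .
qed

lemma cover_measure:
  fixes X :: "'a::euclidean_space set"
  assumes X: "X \<in> sets lborel" and R: "0 \<le> R"
    and cov: "\<And>e. e > 0 \<Longrightarrow> \<exists>c. X \<subseteq> cball c (R + e)"
  shows "emeasure lborel X \<le> ennreal (unit_ball_vol (real DIM('a)) * R ^ DIM('a))"
proof -
  let ?K = "unit_ball_vol (real DIM('a))"
  have "((\<lambda>e. ?K * (R + e) ^ DIM('a)) \<longlongrightarrow> ?K * (R + 0) ^ DIM('a)) (at_right 0)"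
    by (intro tendsto_intros)
  then have lim: "((\<lambda>e. ennreal (?K * (R + e) ^ DIM('a))) \<longlongrightarrow> ennreal (?K * R ^ DIM('a))) (at_right 0)"
    by (intro tendsto_ennrealI) simp
  have ev: "eventually (\<lambda>e. emeasure lborel X \<le> ennreal (?K * (R + e) ^ DIM('a))) (at_right (0::real))"
    using eventually_at_right_less[of "0::real"]
  proof (rule eventually_mono)
    fix e :: real assume e: "0 < e"
    obtain c where c: "X \<subseteq> cball c (R + e)" using cov[OF e] by blast
    have "emeasure lborel X \<le> emeasure lborel (cball c (R + e))"
      using c by (intro emeasure_mono) auto
    also have "\<dots> = ennreal (?K * (R + e) ^ DIM('a))"
      using R e by (intro emeasure_cball) simp
    finally show "emeasure lborel X \<le> ennreal (?K * (R + e) ^ DIM('a))" .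
  qed
  show ?thesis
    by (rule tendsto_le[OF trivial_limit_at_right_real lim tendsto_const ev])
qed


lemma level_core:
  fixes f g s :: "'a::euclidean_space \<Rightarrow> ennreal"
  assumes sm[measurable]: "s \<in> borel_measurable borel"
    and sle: "\<And>x. s x \<le> supmin_conv f g x"
    and t: "0 \<le> t" "t < t'"
  shows "emeasure lborel {x. ennreal t' < s x} \<le> 2 ^ (DIM('a) - 1) *
    (emeasure lborel {x. ennreal t < e2ennreal (hat (\<lambda>y. enn2ereal (f y)) x)}
     + emeasure lborel {x. ennreal t < e2ennreal (hat (\<lambda>y. enn2ereal (g y)) x)})"
proof -
  define F where "F = (\<lambda>y. enn2ereal (f y))"
  define G where "G = (\<lambda>y. enn2ereal (g y))"
  define Hf where "Hf = {x. ennreal t < e2ennreal (hat F x)}"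
  define Hg where "Hg = {x. ennreal t < e2ennreal (hat G x)}"
  define X where "X = {x. ennreal t' < s x}"
  let ?N = "DIM('a)"
  let ?K = "unit_ball_vol (real DIM('a))"
  have t'0: "0 < t'" using t by simp
  have tt': "ennreal t < ennreal t'" using t by (intro ennreal_lessI) auto
  have et': "ereal t' = enn2ereal (ennreal t')" using t'0 by (simp add: enn2ereal_ennreal)
  have AfE: "{y. ereal t' < F y} = {y. ennreal t' < f y}"
    unfolding F_def et' by (simp add: less_ennreal.rep_eq)
  have AgE: "{y. ereal t' < G y} = {y. ennreal t' < g y}"
    unfolding G_def et' by (simp add: less_ennreal.rep_eq)
  have Hfm: "Hf \<in> sets lborel"
  proof -
    have [measurable]: "(\<lambda>x. e2ennreal (hat F x)) \<in> borel_measurable borel" by (rule hat_measurable)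
    show ?thesis unfolding Hf_def by measurable
  qed
  have Hgm: "Hg \<in> sets lborel"
  proof -
    have [measurable]: "(\<lambda>x. e2ennreal (hat G x)) \<in> borel_measurable borel" by (rule hat_measurable)
    show ?thesis unfolding Hg_def by measurable
  qed
  have Xm: "X \<in> sets lborel" unfolding X_def by measurable
  have inH: "x \<in> {x. ennreal t < e2ennreal (hat H x)}"
    if "ennreal (norm x) < rho_plus H (ereal t')" for H :: "'a \<Rightarrow> ereal" and x
  proof -
    have "ereal t' \<le> hat H x" using hat_ge[OF that] .
    then have "e2ennreal (ereal t') \<le> e2ennreal (hat H x)" by (rule e2ennreal_mono)
    then have "ennreal t' \<le> e2ennreal (hat H x)" by (simp add: e2ennreal_ereal)
    then show ?thesis using tt' by auto
  qed
  have subX: "X \<subseteq> {x. \<exists>y. x - y \<in> {y. ennreal t' < f y} \<and> y \<in> {y. ennreal t' < g y}}"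
  proof
    fix x assume "x \<in> X"
    then have "ennreal t' < supmin_conv f g x" using sle[of x] unfolding X_def by (auto intro: less_le_trans)
    then obtain y where "ennreal t' < min (f (x - y)) (g y)"
      unfolding supmin_conv_def by (auto simp: less_SUP_iff)
    then show "x \<in> {x. \<exists>y. x - y \<in> {y. ennreal t' < f y} \<and> y \<in> {y. ennreal t' < g y}}" by auto
  qed
  have pos2: "(2::ennreal) ^ (?N - 1) \<noteq> 0" by simp
  show ?thesis
    unfolding F_def[symmetric] G_def[symmetric] Hf_def[symmetric] Hg_def[symmetric] X_def[symmetric]
  proof (cases "rho_plus F (ereal t') = \<infinity> \<or> rho_plus G (ereal t') = \<infinity>")
    case True
    then have "Hf = UNIV \<or> Hg = UNIV" using inH[of _ F] inH[of _ G]
      unfolding Hf_def Hg_def by auto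
    then have "emeasure lborel Hf + emeasure lborel Hg = \<infinity>" by auto
    then show "emeasure lborel X \<le> 2 ^ (?N - 1) * (emeasure lborel Hf + emeasure lborel Hg)"
    proof -
      have "2 ^ (?N - 1) * (emeasure lborel Hf + emeasure lborel Hg) = \<infinity>"
        unfolding \<open>emeasure lborel Hf + emeasure lborel Hg = \<infinity>\<close> using pos2
        by (simp add: ennreal_mult_top)
      then show ?thesis by simp
    qed
  next
    case False
    then have fF: "rho_plus F (ereal t') < \<infinity>" and fG: "rho_plus G (ereal t') < \<infinity>"
      by (auto simp: top.not_eq_extremum)
    show "emeasure lborel X \<le> 2 ^ (?N - 1) * (emeasure lborel Hf + emeasure lborel Hg)"
    proof (cases "{y. ennreal t' < f y} = {} \<or> {y. ennreal t' < g y} = {}")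
      case True
      then have "X = {}" using subX by auto
      then show ?thesis by simp
    next
      case False
      define RA where "RA = enn2real (rho_plus F (ereal t'))"
      define RB where "RB = enn2real (rho_plus G (ereal t'))"
      have RA0: "0 \<le> RA" and RB0: "0 \<le> RB" unfolding RA_def RB_def by auto
      have rA: "rho_plus F (ereal t') = ennreal RA" unfolding RA_def using fF by simp
      have rB: "rho_plus G (ereal t') = ennreal RB" unfolding RB_def using fG by simp
      have encA: "enc_radius {y. ennreal t' < f y} = rho_plus F (ereal t')"
        unfolding rho_plus_def AfE ..
      have encB: "enc_radius {y. ennreal t' < g y} = rho_plus G (ereal t')"
        unfolding rho_plus_def AgE ..
      have cov: "\<exists>c. X \<subseteq> cball c (RA + RB + e)" if e: "e > 0" for e
      proof -
        have neA: "{y. ennreal t' < f y} \<noteq> {}" and neB: "{y. ennreal t' < g y} \<noteq> {}"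
          using False by auto
        have "\<exists>c. {y. ennreal t' < f y} \<subseteq> cball c (RA + e/2)"
          by (rule enc_radius_cover[OF neA, unfolded encA RA_def[symmetric]]) (use fF e in auto)
        then obtain cA where cA: "{y. ennreal t' < f y} \<subseteq> cball cA (RA + e/2)" by blast
        have "\<exists>c. {y. ennreal t' < g y} \<subseteq> cball c (RB + e/2)"
          by (rule enc_radius_cover[OF neB, unfolded encB RB_def[symmetric]]) (use fG e in auto)
        then obtain cB where cB: "{y. ennreal t' < g y} \<subseteq> cball cB (RB + e/2)" by blast
        have "X \<subseteq> cball (cA + cB) (RA + RB + e)"
        proof
          fix x assume "x \<in> X"
          then obtain y where y: "x - y \<in> {y. ennreal t' < f y}" "y \<in> {y. ennreal t' < g y}"
            using subX by blast
          have d1: "dist cA (x - y) \<le> RA + e/2" using cA y(1) by auto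
          have d2: "dist cB y \<le> RB + e/2" using cB y(2) by auto
          have "dist (cA + cB) x = norm ((cA - (x - y)) + (cB - y))"
            by (simp add: dist_norm algebra_simps)
          also have "\<dots> \<le> norm (cA - (x - y)) + norm (cB - y)" by (rule norm_triangle_ineq)
          also have "\<dots> \<le> RA + RB + e" using d1 d2 by (simp add: dist_norm)
          finally show "x \<in> cball (cA + cB) (RA + RB + e)" by simp
        qed
        then show ?thesis by blast
      qed
      have "emeasure lborel X \<le> ennreal (?K * (RA + RB) ^ ?N)"
        by (rule cover_measure[OF Xm _ cov]) (use RA0 RB0 in auto)
      also have "\<dots> \<le> ennreal (2 ^ (?N - 1) * (?K * RA ^ ?N + ?K * RB ^ ?N))"
      proof (rule ennreal_leI)
        have "(RA + RB) ^ ?N \<le> 2 ^ (?N - 1) * (RA ^ ?N + RB ^ ?N)"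
          using convex_pow[OF RA0 RB0, of ?N] by (simp add: DIM_positive Suc_leI)
        then have "?K * (RA + RB) ^ ?N \<le> ?K * (2 ^ (?N - 1) * (RA ^ ?N + RB ^ ?N))"
          by (intro mult_left_mono) auto
        then show "?K * (RA + RB) ^ ?N \<le> 2 ^ (?N - 1) * (?K * RA ^ ?N + ?K * RB ^ ?N)"
          by (simp add: algebra_simps)
      qed
      also have "\<dots> = 2 ^ (?N - 1) * (ennreal (?K * RA ^ ?N) + ennreal (?K * RB ^ ?N))"
        using RA0 RB0 by (simp add: ennreal_mult ennreal_plus ennreal_power[symmetric])
      also have "\<dots> \<le> 2 ^ (?N - 1) * (emeasure lborel Hf + emeasure lborel Hg)"
      proof (intro mult_left_mono add_mono)
        have "ball 0 RA \<subseteq> Hf"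
        proof
          fix x :: 'a assume "x \<in> ball 0 RA"
          then have "norm x < RA" by simp
          then have "ennreal (norm x) < rho_plus F (ereal t')" unfolding rA
            by (metis ennreal_lessI norm_ge_zero le_less_trans)
          then show "x \<in> Hf" using inH unfolding Hf_def by blast
        qed
        then have "emeasure lborel (ball (0::'a) RA) \<le> emeasure lborel Hf"
          using Hfm by (intro emeasure_mono) auto
        then show "ennreal (?K * RA ^ ?N) \<le> emeasure lborel Hf"
          using emeasure_ball[OF RA0, of "0::'a"] by simp
        have "ball 0 RB \<subseteq> Hg"
        proof
          fix x :: 'a assume "x \<in> ball 0 RB"
          then have "norm x < RB" by simp
          then have "ennreal (norm x) < rho_plus G (ereal t')" unfolding rB
            by (metis ennreal_lessI norm_ge_zero le_less_trans)
          then show "x \<in> Hg" using inH unfolding Hg_def by blast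
        qed
        then have "emeasure lborel (ball (0::'a) RB) \<le> emeasure lborel Hg"
          using Hgm by (intro emeasure_mono) auto
        then show "ennreal (?K * RB ^ ?N) \<le> emeasure lborel Hg"
          using emeasure_ball[OF RB0, of "0::'a"] by simp
      qed simp
      finally show ?thesis .
    qed
  qed
qed


lemma level_bound:
  fixes f g s :: "'a::euclidean_space \<Rightarrow> ennreal"
  assumes sm[measurable]: "s \<in> borel_measurable borel"
    and sle: "\<And>x. s x \<le> supmin_conv f g x"
    and t: "0 \<le> t"
  shows "emeasure lborel {x. ennreal t < s x} \<le> 2 ^ (DIM('a) - 1) *
    (emeasure lborel {x. ennreal t < e2ennreal (hat (\<lambda>y. enn2ereal (f y)) x)}
     + emeasure lborel {x. ennreal t < e2ennreal (hat (\<lambda>y. enn2ereal (g y)) x)})"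
    (is "_ \<le> ?R")
proof -
  define A where "A n = {x. ennreal (t + inverse (real (Suc n))) < s x}" for n
  have Am: "range A \<subseteq> sets lborel" unfolding A_def by auto
  have inc: "incseq A"
  proof (rule incseq_SucI)
    fix n
    have "inverse (real (Suc (Suc n))) \<le> inverse (real (Suc n))"
      by (simp add: le_imp_inverse_le)
    then have "ennreal (t + inverse (real (Suc (Suc n)))) \<le> ennreal (t + inverse (real (Suc n)))"
      by (intro ennreal_leI) simp
    then show "A n \<subseteq> A (Suc n)" unfolding A_def by (auto intro: le_less_trans)
  qed
  have U: "{x. ennreal t < s x} = (\<Union>n. A n)"
  proof (intro set_eqI iffI)
    fix x assume "x \<in> {x. ennreal t < s x}"
    then have lt: "ennreal t < s x" by simp
    show "x \<in> (\<Union>n. A n)"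
    proof (cases "s x" rule: ennreal_cases)
      case (real a)
      then have "t < a" using lt t by (simp add: ennreal_less_iff)
      then obtain n where n: "inverse (real (Suc n)) < a - t"
        using reals_Archimedean[of "a - t"] by auto
      then have "ennreal (t + inverse (real (Suc n))) < ennreal a"
        using t \<open>t < a\<close> n by (intro ennreal_lessI) linarith+
      then show ?thesis using real unfolding A_def by auto
    next
      case top
      then show ?thesis unfolding A_def by auto
    qed
  next
    fix x assume "x \<in> (\<Union>n. A n)"
    then obtain n where "ennreal (t + inverse (real (Suc n))) < s x" unfolding A_def by auto
    moreover have "ennreal t \<le> ennreal (t + inverse (real (Suc n)))" by (intro ennreal_leI) simp
    ultimately show "x \<in> {x. ennreal t < s x}" by auto
  qed
  have "emeasure lborel {x. ennreal t < s x} = (SUP n. emeasure lborel (A n))"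
    unfolding U by (rule SUP_emeasure_incseq[OF Am inc, symmetric])
  also have "\<dots> \<le> ?R"
  proof (rule SUP_least)
    fix n
    show "emeasure lborel (A n) \<le> ?R"
      unfolding A_def by (rule level_core[OF sm sle t]) simp
  qed
  finally show ?thesis .
qed

theorem lemma15:
  fixes f g :: "'a::euclidean_space \<Rightarrow> ennreal"
  assumes "f \<in> borel_measurable borel" and "g \<in> borel_measurable borel"
  shows "(\<integral>\<^sup>+ x. supmin_conv f g x \<partial>lebesgue)
           \<le> 2 ^ (DIM('a) - 1) *
             ((\<integral>\<^sup>+ x. e2ennreal (hat (\<lambda>y. enn2ereal (f y)) x) \<partial>lebesgue)
              + (\<integral>\<^sup>+ x. e2ennreal (hat (\<lambda>y. enn2ereal (g y)) x) \<partial>lebesgue))"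
proof -
  define hf where "hf = (\<lambda>x. e2ennreal (hat (\<lambda>y. enn2ereal (f y)) x))"
  define hg where "hg = (\<lambda>x. e2ennreal (hat (\<lambda>y. enn2ereal (g y)) x))"
  have hfm[measurable]: "hf \<in> borel_measurable borel" unfolding hf_def by (rule hat_measurable)
  have hgm[measurable]: "hg \<in> borel_measurable borel" unfolding hg_def by (rule hat_measurable)
  let ?c = "(2::ennreal) ^ (DIM('a) - 1)"
  define Lf where "Lf t = emeasure lborel {x. ennreal t < hf x}" for t :: real
  define Lg where "Lg t = emeasure lborel {x. ennreal t < hg x}" for t :: real
  have Lfm[measurable]: "Lf \<in> borel_measurable borel"
  proof (rule antimono_borel)
    fix a b :: real assume "a \<le> b"
    then show "Lf b \<le> Lf a" unfolding Lf_def
      by (intro emeasure_mono) (auto intro: le_less_trans ennreal_leI)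
  qed
  have Lgm[measurable]: "Lg \<in> borel_measurable borel"
  proof (rule antimono_borel)
    fix a b :: real assume "a \<le> b"
    then show "Lg b \<le> Lg a" unfolding Lg_def
      by (intro emeasure_mono) (auto intro: le_less_trans ennreal_leI)
  qed
  have main: "integral\<^sup>S lborel s \<le> ?c * (integral\<^sup>N lborel hf + integral\<^sup>N lborel hg)"
    if s: "s \<in> {s. simple_function lborel s \<and> s \<le> supmin_conv f g}" for s
  proof -
    have ss: "simple_function lborel s" and sle: "\<And>x. s x \<le> supmin_conv f g x"
      using s by (auto simp: le_fun_def)
    have sm: "s \<in> borel_measurable borel"
      using borel_measurable_simple_function[OF ss] by simp
    have "integral\<^sup>S lborel s = integral\<^sup>N lborel s"
      by (rule nn_integral_eq_simple_integral[OF ss, symmetric])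
    also have "\<dots> = (\<integral>\<^sup>+ t. indicator {0..} t * emeasure lborel {x. ennreal t < s x} \<partial>lborel)"
      by (rule layer_cake[OF sm])
    also have "\<dots> \<le> (\<integral>\<^sup>+ t. ?c * (indicator {0..} t * Lf t + indicator {0..} t * Lg t) \<partial>lborel)"
    proof (rule nn_integral_mono)
      fix t :: real
      show "indicator {0..} t * emeasure lborel {x. ennreal t < s x}
            \<le> ?c * (indicator {0..} t * Lf t + indicator {0..} t * Lg t)"
      proof (cases "0 \<le> t")
        case True
        then show ?thesis using level_bound[OF sm sle True]
          by (simp add: Lf_def Lg_def hf_def hg_def)
      qed simp
    qed
    also have "\<dots> = ?c * ((\<integral>\<^sup>+ t. indicator {0..} t * Lf t \<partial>lborel) + (\<integral>\<^sup>+ t. indicator {0..} t * Lg t \<partial>lborel))"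
    proof -
      have "(\<integral>\<^sup>+ t. ?c * (indicator {0..} t * Lf t + indicator {0..} t * Lg t) \<partial>lborel)
          = ?c * (\<integral>\<^sup>+ t. (indicator {0..} t * Lf t + indicator {0..} t * Lg t) \<partial>lborel)"
        by (rule nn_integral_cmult) measurable
      also have "(\<integral>\<^sup>+ t. (indicator {0..} t * Lf t + indicator {0..} t * Lg t) \<partial>lborel)
          = (\<integral>\<^sup>+ t. indicator {0..} t * Lf t \<partial>lborel) + (\<integral>\<^sup>+ t. indicator {0..} t * Lg t \<partial>lborel)"
        by (rule nn_integral_add) measurable
      finally show ?thesis .
    qed
    also have "\<dots> = ?c * (integral\<^sup>N lborel hf + integral\<^sup>N lborel hg)"
      using layer_cake[OF hfm] layer_cake[OF hgm] by (simp add: Lf_def Lg_def)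
    finally show ?thesis .
  qed
  have "integral\<^sup>N lborel (supmin_conv f g) \<le> ?c * (integral\<^sup>N lborel hf + integral\<^sup>N lborel hg)"
    unfolding nn_integral_def[of lborel "supmin_conv f g"] by (rule SUP_least) (rule main)
  then show ?thesis
    by (simp add: nn_integral_completion hf_def hg_def)
qed

end
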